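(* Let $\kappa\neq0$ and let $S$ be a $\kappa$-cylindrical surface with directrix $\alpha=(x,z)$, where $(x,z,\theta)$ solves $x'=\cos\theta$, $z'=\sin\theta$, $\theta'=\kappa z$ on $\mathbb R$. Assume that $\alpha$ crosses the $x$-axis at $s=s_0$, i.e. $z(s_0)=0$. Then the curve $\alpha$ is symmetric with respect to the point $\alpha(s_0)$.
   Context: A $\kappa$-cylindrical surface ($\kappa\ne0$ constant) is a cylindrical ruled surface in $\mathbb R^3$ locally satisfying $\operatorname{div}\big(Du/\sqrt{1+|Du|^2}\big)=\kappa u$ (mean curvature equal to $\kappa z/2$). It has horizontal rulings and is of the form $(x(s),t,z(s))$, with arc-length directrix $\alpha=(x,z)$ and $\theta$ the angle between $\partial/\partial x$ and $\alpha'$, satisfying the system above. *)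

theory Defs
  imports Complex_Main
begin

end

theory Submission
  imports Defs
begin

lemma sin_lip: "\<bar>sin a - sin b\<bar> \<le> \<bar>a - b\<bar>" for a b :: real
proof -
  have "\<bar>sin a - sin b\<bar> = 2 * \<bar>sin ((a - b) / 2)\<bar> * \<bar>cos ((a + b) / 2)\<bar>"
    by (simp add: sin_diff_sin abs_mult)
  also have "\<dots> \<le> 2 * \<bar>sin ((a - b) / 2)\<bar> * 1"
    by (intro mult_left_mono) auto
  also have "\<dots> \<le> 2 * \<bar>(a - b) / 2\<bar>"
    using abs_sin_x_le_abs_x[of "(a - b)/2"] by simp
  finally show ?thesis by simp
qed

theorem mainTheorem3:
  fixes \<kappa> s\<^sub>0 :: real and x z \<theta> :: "real \<Rightarrow> real"
  assumes "\<kappa> \<noteq> 0"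
    and dx: "\<And>s. (x has_real_derivative cos (\<theta> s)) (at s)"
    and dz: "\<And>s. (z has_real_derivative sin (\<theta> s)) (at s)"
    and dt: "\<And>s. (\<theta> has_real_derivative \<kappa> * z s) (at s)"
    and z0: "z s\<^sub>0 = 0"
  shows "\<forall>s. x (s\<^sub>0 + s) + x (s\<^sub>0 - s) = 2 * x s\<^sub>0
            \<and> z (s\<^sub>0 + s) + z (s\<^sub>0 - s) = 2 * z s\<^sub>0"
proof -
  define u where "u s = z (s\<^sub>0 + s) + z (s\<^sub>0 - s)" for s
  define v where "v s = \<theta> (s\<^sub>0 + s) - \<theta> (s\<^sub>0 - s)" for s
  define C where "C = 1 + \<bar>\<kappa>\<bar>"
  define E where "E s = (u s)^2 + (v s)^2" for s
  define f where "f s = E s * exp (- C * s)" for s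
  have du: "(u has_real_derivative (sin (\<theta> (s\<^sub>0 + s)) - sin (\<theta> (s\<^sub>0 - s)))) (at s)" for s
    unfolding u_def
    by (rule derivative_eq_intros DERIV_chain2[OF dz] | simp)+
  have dv: "(v has_real_derivative \<kappa> * u s) (at s)" for s
    unfolding v_def u_def
    by (rule derivative_eq_intros DERIV_chain2[OF dt] | simp add: algebra_simps)+
  have dE: "(E has_real_derivative 2 * u s * (sin (\<theta> (s\<^sub>0 + s)) - sin (\<theta> (s\<^sub>0 - s))) + 2 * v s * (\<kappa> * u s)) (at s)" for s
    unfolding E_def
    by (rule derivative_eq_intros du dv | simp)+
  have bound: "2 * u s * (sin (\<theta> (s\<^sub>0 + s)) - sin (\<theta> (s\<^sub>0 - s))) + 2 * v s * (\<kappa> * u s) \<le> C * E s" for s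
  proof -
    have a: "\<bar>sin (\<theta> (s\<^sub>0 + s)) - sin (\<theta> (s\<^sub>0 - s))\<bar> \<le> \<bar>v s\<bar>"
      unfolding v_def by (rule sin_lip)
    have "2 * u s * (sin (\<theta> (s\<^sub>0 + s)) - sin (\<theta> (s\<^sub>0 - s))) \<le> \<bar>2 * u s * (sin (\<theta> (s\<^sub>0 + s)) - sin (\<theta> (s\<^sub>0 - s)))\<bar>"
      by (rule abs_ge_self)
    also have "\<dots> = 2 * \<bar>u s\<bar> * \<bar>sin (\<theta> (s\<^sub>0 + s)) - sin (\<theta> (s\<^sub>0 - s))\<bar>"
      by (simp add: abs_mult)
    also have "\<dots> \<le> 2 * \<bar>u s\<bar> * \<bar>v s\<bar>"
      by (rule mult_left_mono[OF a]) simp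
    finally have b1: "2 * u s * (sin (\<theta> (s\<^sub>0 + s)) - sin (\<theta> (s\<^sub>0 - s))) \<le> 2 * \<bar>u s\<bar> * \<bar>v s\<bar>" .
    have "2 * v s * (\<kappa> * u s) \<le> \<bar>2 * v s * (\<kappa> * u s)\<bar>" by (rule abs_ge_self)
    also have "\<dots> = \<bar>\<kappa>\<bar> * (2 * \<bar>u s\<bar> * \<bar>v s\<bar>)" by (simp add: abs_mult)
    finally have b2: "2 * v s * (\<kappa> * u s) \<le> \<bar>\<kappa>\<bar> * (2 * \<bar>u s\<bar> * \<bar>v s\<bar>)" .
    have b3: "2 * \<bar>u s\<bar> * \<bar>v s\<bar> \<le> E s"
      unfolding E_def using sum_squares_bound[of "\<bar>u s\<bar>" "\<bar>v s\<bar>"] by simp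
    have b4: "\<bar>\<kappa>\<bar> * (2 * \<bar>u s\<bar> * \<bar>v s\<bar>) \<le> \<bar>\<kappa>\<bar> * E s"
      by (rule mult_left_mono[OF b3]) simp
    show ?thesis unfolding C_def using b1 b2 b3 b4 by (simp add: algebra_simps)
  qed
  have df: "(f has_real_derivative (2 * u s * (sin (\<theta> (s\<^sub>0 + s)) - sin (\<theta> (s\<^sub>0 - s))) + 2 * v s * (\<kappa> * u s) - C * E s) * exp (- C * s)) (at s)" for s
    unfolding f_def
    by (rule derivative_eq_intros dE | simp add: algebra_simps)+
  have E0: "E 0 = 0" unfolding E_def u_def v_def using z0 by simp
  have Enn: "E s \<ge> 0" for s unfolding E_def by simp
  have Epos: "E s = 0" if "s \<ge> 0" for s
  proof -
    have "f 0 \<ge> f s"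
    proof (rule DERIV_nonpos_imp_nonincreasing[OF that])
      fix t show "\<exists>y. DERIV f t :> y \<and> y \<le> 0"
        using df[of t] bound[of t] by (metis diff_le_0_iff_le exp_ge_zero mult_nonpos_nonneg)
    qed
    hence "E s * exp (- C * s) \<le> 0" using E0 unfolding f_def by simp
    hence "E s \<le> 0" by (simp add: mult_le_0_iff)
    with Enn show ?thesis by (simp add: antisym)
  qed
  have Esym: "E (- s) = E s" for s
    unfolding E_def u_def v_def by (simp add: power2_eq_square algebra_simps)
  have Eall: "E s = 0" for s
    using Epos Esym by (cases "s \<ge> 0") (auto, metis neg_0_le_iff_le nle_le)
  have uv: "u s = 0 \<and> v s = 0" for s
    using Eall[of s] unfolding E_def by (simp add: sum_power2_eq_zero_iff)
  define w where "w s = x (s\<^sub>0 + s) + x (s\<^sub>0 - s)" for s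
  have dw: "(w has_real_derivative 0) (at s)" for s
  proof -
    have "(w has_real_derivative cos (\<theta> (s\<^sub>0 + s)) - cos (\<theta> (s\<^sub>0 - s))) (at s)"
      unfolding w_def
      by (rule derivative_eq_intros DERIV_chain2[OF dx] | simp)+
    moreover have "\<theta> (s\<^sub>0 + s) = \<theta> (s\<^sub>0 - s)" using uv[of s] unfolding v_def by simp
    ultimately show ?thesis by simp
  qed
  have "w s = w 0" for s using DERIV_isconst_all dw by blast
  then show ?thesis using uv z0 unfolding w_def u_def by simp
qed

end
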